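(* Consider a chain of $N$ sites, each with a finite-dimensional local Hilbert space, and let $$H=\sum_{j=1}^{N-1}L_{j,j+1}^\dagger L_{j,j+1},$$ where each operator $L_{j,j+1}$ acts non-trivially only on sites $j$ and $j+1$. Suppose the ground-state manifold of $H$ is $G=\bigcap_{j}\ker(L_{j,j+1})\neq\{0\}$, spanned by linearly independent states $|\Psi_1\rangle,\ldots,|\Psi_n\rangle$. For each site $j$ let $M_j$ be an invertible operator acting non-trivially only on site $j$, let $M=\prod_j M_j$, and set $\tilde L_{j,j+1}=ML_{j,j+1}M^{-1}=M_jM_{j+1}L_{j,j+1}M_{j+1}^{-1}M_j^{-1}$. For each $j$ let $C_{j,j+1}=K_{j,j+1}^\dagger K_{j,j+1}$ be a positive definite operator (i.e. $\langle\Psi|C_{j,j+1}|\Psi\rangle>0$ for all $|\Psi\rangle\neq 0$) acting non-trivially only on sites $j,j+1$, and define $$\tilde H=\sum_{j=1}^{N-1}\tilde L_{j,j+1}^\dagger C_{j,j+1}\tilde L_{j,j+1}.$$ Then the ground-state manifold $\tilde G$ of $\tilde H$ is $\tilde G=\mathrm{Span}\{M|\Psi_1\rangle,\ldots,M|\Psi_n\rangle\}$ (it equals $\ker\tilde H=\bigcap_j\ker\tilde L_{j,j+1}$); in particular $H$ and $\tilde H$ have the same ground-state degeneracy.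
   Context: Operators acting non-trivially on certain sites are understood as tensored with identities on all other sites. $A^\dagger$ denotes the adjoint. The ground-state manifold of a positive semi-definite Hamiltonian with non-trivial kernel is its kernel (the eigenspace of eigenvalue $0$). *)

theory Defs
  imports "Jordan_Normal_Form.Schur_Decomposition" "Jordan_Normal_Form.VS_Connect" "Jordan_Normal_Form.Matrix_Kernel"
begin

text \<open>The total Hilbert space is C^D with D = prod of the d i; a basis index k < D
  encodes the configuration whose i-th local index is digit d i k (mixed radix).\<close>

definition tot_dim :: "(nat \<Rightarrow> nat) \<Rightarrow> nat \<Rightarrow> nat" where
  "tot_dim d N = (\<Prod>i<N. d i)"

definition digit :: "(nat \<Rightarrow> nat) \<Rightarrow> nat \<Rightarrow> nat \<Rightarrow> nat" where
  "digit d i k = (k div (\<Prod>l<i. d l)) mod d i"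

text \<open>A acts non-trivially only on the sites in S: A = a \<otimes> Id, i.e. its matrix
  elements vanish unless the configurations agree outside S, and then only
  depend on the local indices at the sites in S.\<close>
definition acts_on :: "(nat \<Rightarrow> nat) \<Rightarrow> nat \<Rightarrow> nat set \<Rightarrow> complex mat \<Rightarrow> bool" where
  "acts_on d N S A \<longleftrightarrow> A \<in> carrier_mat (tot_dim d N) (tot_dim d N) \<and>
     (\<exists>a :: (nat \<Rightarrow> nat) \<Rightarrow> (nat \<Rightarrow> nat) \<Rightarrow> complex.
        \<forall>k < tot_dim d N. \<forall>l < tot_dim d N.
          A $$ (k, l) =
            (if \<forall>i<N. i \<notin> S \<longrightarrow> digit d i k = digit d i l
             then a (\<lambda>i. if i \<in> S then digit d i k else 0)
                    (\<lambda>i. if i \<in> S then digit d i l else 0)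
             else 0))"

definition bond_sum :: "nat \<Rightarrow> nat \<Rightarrow> (nat \<Rightarrow> complex mat) \<Rightarrow> complex mat" where
  "bond_sum D N F = foldr (\<lambda>j acc. F j + acc) [0..<N-1] (0\<^sub>m D D)"

definition site_prod :: "nat \<Rightarrow> nat \<Rightarrow> (nat \<Rightarrow> complex mat) \<Rightarrow> complex mat" where
  "site_prod D N Ms = foldr (\<lambda>j acc. Ms j * acc) [0..<N] (1\<^sub>m D)"

definition site_prod_inv :: "nat \<Rightarrow> nat \<Rightarrow> (nat \<Rightarrow> complex mat) \<Rightarrow> complex mat" where
  "site_prod_inv D N Mi = foldr (\<lambda>j acc. acc * Mi j) [0..<N] (1\<^sub>m D)"

abbreviation cspan :: "nat \<Rightarrow> complex vec set \<Rightarrow> complex vec set" where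
  "cspan D S \<equiv> LinearCombinations.module.span class_ring (module_vec TYPE(complex) D) S"

abbreviation clin_indpt :: "nat \<Rightarrow> complex vec set \<Rightarrow> bool" where
  "clin_indpt D S \<equiv> LinearCombinations.module.lin_indpt class_ring (module_vec TYPE(complex) D) S"

end

theory Submission
  imports Defs
begin


lemma adj_carrier:
  fixes X :: "complex mat"
  assumes X: "X \<in> carrier_mat n n"
  shows "mat_adjoint X \<in> carrier_mat n n"
  using X unfolding mat_adjoint_def by auto

lemma adj_inner:
  fixes X :: "complex mat"
  assumes X: "X \<in> carrier_mat n n" and w: "w \<in> carrier_vec n" and v: "v \<in> carrier_vec n"
  shows "(mat_adjoint X *\<^sub>v w) \<bullet>c v = w \<bullet>c (X *\<^sub>v v)"
proof -
  have adj: "mat_adjoint X \<in> carrier_mat n n" using X unfolding mat_adjoint_def by auto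
  have e: "\<And>i k. i < n \<Longrightarrow> k < n \<Longrightarrow> mat_adjoint X $$ (i,k) = cnj (X $$ (k,i))"
    using X unfolding mat_adjoint_def by (auto simp: mat_of_rows_index)
  have "(mat_adjoint X *\<^sub>v w) \<bullet>c v = (\<Sum>i<n. (\<Sum>k<n. cnj (X $$ (k,i)) * w $ k) * cnj (v $ i))"
    using adj w v e by (simp add: scalar_prod_def mult_mat_vec_def row_def lessThan_atLeast0)
  also have "\<dots> = (\<Sum>k<n. w $ k * cnj (\<Sum>i<n. X $$ (k,i) * v $ i))"
    by (simp add: sum_distrib_left sum_distrib_right mult_ac) (rule sum.swap)
  also have "\<dots> = w \<bullet>c (X *\<^sub>v v)"
    using X w v by (simp add: scalar_prod_def mult_mat_vec_def row_def lessThan_atLeast0)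
  finally show ?thesis .
qed



lemma mat_vec_zero[simp]: "B \<in> carrier_mat m n \<Longrightarrow> B *\<^sub>v 0\<^sub>v n = 0\<^sub>v m"
  by (intro eq_vecI) auto

lemma foldr_carrier:
  assumes "\<And>j. j \<in> set js \<Longrightarrow> F j \<in> carrier_mat D D"
  shows "foldr (\<lambda>j acc. F j + acc) js (0\<^sub>m D D) \<in> carrier_mat D D"
  using assms by (induction js) auto

lemma foldr_zero:
  assumes "\<And>j. j \<in> set js \<Longrightarrow> F j \<in> carrier_mat D D \<and> F j *\<^sub>v v = 0\<^sub>v D"
    and v: "v \<in> carrier_vec D"
  shows "foldr (\<lambda>j acc. F j + acc) js (0\<^sub>m D D) *\<^sub>v v = 0\<^sub>v D"
  using assms
proof (induction js)
  case Nil then show ?case using v by auto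
next
  case (Cons j js)
  have c: "foldr (\<lambda>j acc. F j + acc) js (0\<^sub>m D D) \<in> carrier_mat D D"
    using Cons.prems by (intro foldr_carrier) auto
  have "F j \<in> carrier_mat D D" using Cons.prems by auto
  then show ?case using Cons c v by (simp add: add_mult_distrib_mat_vec[of "F j" D D])
qed

lemma foldr_quad:
  fixes F :: "nat \<Rightarrow> complex mat"
  assumes "\<And>j. j \<in> set js \<Longrightarrow> F j \<in> carrier_mat D D"
    and v: "v \<in> carrier_vec D"
  shows "(foldr (\<lambda>j acc. F j + acc) js (0\<^sub>m D D) *\<^sub>v v) \<bullet>c v = (\<Sum>j\<leftarrow>js. (F j *\<^sub>v v) \<bullet>c v)"
  using assms
proof (induction js)
  case Nil
  have "0\<^sub>m D D *\<^sub>v v = 0\<^sub>v D" using v by (intro eq_vecI) (auto simp: scalar_prod_def)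
  then show ?case using v by (simp add: conjugate_vec_def)
next
  case (Cons j js)
  have c: "foldr (\<lambda>j acc. F j + acc) js (0\<^sub>m D D) \<in> carrier_mat D D"
    using Cons.prems by (intro foldr_carrier) auto
  have f: "F j \<in> carrier_mat D D" using Cons.prems by auto
  have "(foldr (\<lambda>j acc. F j + acc) (j # js) (0\<^sub>m D D) *\<^sub>v v) \<bullet>c v
      = (F j *\<^sub>v v + foldr (\<lambda>j acc. F j + acc) js (0\<^sub>m D D) *\<^sub>v v) \<bullet>c v"
    using c f v by (simp add: add_mult_distrib_mat_vec)
  also have "\<dots> = (F j *\<^sub>v v) \<bullet>c v + (foldr (\<lambda>j acc. F j + acc) js (0\<^sub>m D D) *\<^sub>v v) \<bullet>c v"
    using c f v by (intro add_scalar_prod_distrib[of _ D]) auto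
  finally show ?case using Cons by simp
qed

lemma site_inv:
  fixes Ms Mi :: "nat \<Rightarrow> complex mat"
  assumes "\<And>j. j \<in> set js \<Longrightarrow> Ms j \<in> carrier_mat D D \<and> Mi j \<in> carrier_mat D D
      \<and> Ms j * Mi j = 1\<^sub>m D \<and> Mi j * Ms j = 1\<^sub>m D"
  shows "foldr (\<lambda>j acc. Ms j * acc) js (1\<^sub>m D) \<in> carrier_mat D D
    \<and> foldr (\<lambda>j acc. acc * Mi j) js (1\<^sub>m D) \<in> carrier_mat D D
    \<and> foldr (\<lambda>j acc. Ms j * acc) js (1\<^sub>m D) * foldr (\<lambda>j acc. acc * Mi j) js (1\<^sub>m D) = 1\<^sub>m D
    \<and> foldr (\<lambda>j acc. acc * Mi j) js (1\<^sub>m D) * foldr (\<lambda>j acc. Ms j * acc) js (1\<^sub>m D) = 1\<^sub>m D"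
  using assms
proof (induction js)
  case Nil then show ?case by (auto simp: left_mult_one_mat[OF one_carrier_mat])
next
  case (Cons j js)
  define P where "P = foldr (\<lambda>j acc. Ms j * acc) js (1\<^sub>m D)"
  define Q where "Q = foldr (\<lambda>j acc. acc * Mi j) js (1\<^sub>m D)"
  from Cons have IH: "P \<in> carrier_mat D D" "Q \<in> carrier_mat D D" "P * Q = 1\<^sub>m D" "Q * P = 1\<^sub>m D"
    unfolding P_def Q_def by auto
  from Cons.prems have a: "Ms j \<in> carrier_mat D D" "Mi j \<in> carrier_mat D D"
      "Ms j * Mi j = 1\<^sub>m D" "Mi j * Ms j = 1\<^sub>m D" by auto
  have 1: "(Ms j * P) * (Q * Mi j) = 1\<^sub>m D"
  proof -
    have "(Ms j * P) * (Q * Mi j) = Ms j * (P * (Q * Mi j))"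
      using IH a by (meson assoc_mult_mat mult_carrier_mat)
    also have "P * (Q * Mi j) = (P * Q) * Mi j"
      using assoc_mult_mat[OF IH(1) IH(2) a(2)] by simp
    also have "(P * Q) * Mi j = Mi j" using IH a by simp
    also have "Ms j * Mi j = 1\<^sub>m D" using a by simp
    finally show ?thesis .
  qed
  have 2: "(Q * Mi j) * (Ms j * P) = 1\<^sub>m D"
  proof -
    have "(Q * Mi j) * (Ms j * P) = Q * (Mi j * (Ms j * P))"
      using IH a by (meson assoc_mult_mat mult_carrier_mat)
    also have "Mi j * (Ms j * P) = (Mi j * Ms j) * P"
      using assoc_mult_mat[OF a(2) a(1) IH(1)] by simp
    also have "(Mi j * Ms j) * P = P" using IH a by simp
    also have "Q * P = 1\<^sub>m D" using IH by simp
    finally show ?thesis .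
  qed
  show ?case using 1 2 IH a unfolding P_def Q_def by auto
qed

context vec_space
begin

lemma preimage_submodule:
  assumes B: "B \<in> carrier_mat n n" and W: "submodule class_ring W V"
  shows "submodule class_ring {v \<in> carrier_vec n. B *\<^sub>v v \<in> W} V"
proof -
  interpret W: submodule class_ring W V by (rule W)
  show ?thesis
  proof (unfold_locales)
    show "{v \<in> carrier_vec n. B *\<^sub>v v \<in> W} \<subseteq> carrier V" by auto
  next
    fix v w assume "v \<in> {v \<in> carrier_vec n. B *\<^sub>v v \<in> W}" "w \<in> {v \<in> carrier_vec n. B *\<^sub>v v \<in> W}"
    then show "v \<oplus>\<^bsub>V\<^esub> w \<in> {v \<in> carrier_vec n. B *\<^sub>v v \<in> W}"
      using B W.m_closed by (auto simp: mult_add_distrib_mat_vec)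
  next
    show "\<zero>\<^bsub>V\<^esub> \<in> {v \<in> carrier_vec n. B *\<^sub>v v \<in> W}"
    proof -
      have "B *\<^sub>v 0\<^sub>v n = 0\<^sub>v n" using B by (intro eq_vecI) auto
      then show ?thesis using W.zero_closed by auto
    qed
  next
    fix c :: 'a and v assume "c \<in> carrier class_ring" "v \<in> {v \<in> carrier_vec n. B *\<^sub>v v \<in> W}"
    then show "c \<odot>\<^bsub>V\<^esub> v \<in> {v \<in> carrier_vec n. B *\<^sub>v v \<in> W}"
      using B W.smult_closed by (auto simp: mult_mat_vec)
  qed
qed

lemma span_image_inv:
  assumes A: "A \<in> carrier_mat n n" and B: "B \<in> carrier_mat n n"
    and BA: "B * A = 1\<^sub>m n" and AB: "A * B = 1\<^sub>m n" and S: "S \<subseteq> carrier_vec n"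
  shows "span ((\<lambda>v. A *\<^sub>v v) ` S) = {v \<in> carrier_vec n. B *\<^sub>v v \<in> span S}"
proof
  have AS: "(\<lambda>v. A *\<^sub>v v) ` S \<subseteq> carrier_vec n" using A S by auto
  show "span ((\<lambda>v. A *\<^sub>v v) ` S) \<subseteq> {v \<in> carrier_vec n. B *\<^sub>v v \<in> span S}"
  proof (rule span_is_subset)
    show "submodule class_ring {v \<in> carrier_vec n. B *\<^sub>v v \<in> span S} V"
      by (rule preimage_submodule[OF B span_is_submodule]) (use S in auto)
    show "(\<lambda>v. A *\<^sub>v v) ` S \<subseteq> {v \<in> carrier_vec n. B *\<^sub>v v \<in> span S}"
    proof
      fix x assume "x \<in> (\<lambda>v. A *\<^sub>v v) ` S"
      then obtain s where s: "s \<in> S" "x = A *\<^sub>v s" by auto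
      have "B *\<^sub>v x = s" using s A B BA S by (auto simp flip: assoc_mult_mat_vec)
      then show "x \<in> {v \<in> carrier_vec n. B *\<^sub>v v \<in> span S}"
        using s A S in_own_span[of S] by auto
    qed
  qed
  show "{v \<in> carrier_vec n. B *\<^sub>v v \<in> span S} \<subseteq> span ((\<lambda>v. A *\<^sub>v v) ` S)"
  proof
    fix v assume v: "v \<in> {v \<in> carrier_vec n. B *\<^sub>v v \<in> span S}"
    have "span S \<subseteq> {w \<in> carrier_vec n. A *\<^sub>v w \<in> span ((\<lambda>v. A *\<^sub>v v) ` S)}"
    proof (rule span_is_subset)
      show "submodule class_ring {w \<in> carrier_vec n. A *\<^sub>v w \<in> span ((\<lambda>v. A *\<^sub>v v) ` S)} V"
        by (rule preimage_submodule[OF A span_is_submodule]) (use AS in auto)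
      show "S \<subseteq> {w \<in> carrier_vec n. A *\<^sub>v w \<in> span ((\<lambda>v. A *\<^sub>v v) ` S)}"
        using S AS in_own_span[OF AS] by auto
    qed
    then have "A *\<^sub>v (B *\<^sub>v v) \<in> span ((\<lambda>v. A *\<^sub>v v) ` S)" using v by auto
    moreover have "A *\<^sub>v (B *\<^sub>v v) = v" using v A B AB by (auto simp flip: assoc_mult_mat_vec)
    ultimately show "v \<in> span ((\<lambda>v. A *\<^sub>v v) ` S)" by simp
  qed
qed

lemma mat_linear_map:
  assumes A: "A \<in> carrier_mat n n"
  shows "linear_map class_ring V V (\<lambda>v. A *\<^sub>v v)"
proof -
  have h: "(\<lambda>v. A *\<^sub>v v) \<in> LinearCombinations.module_hom class_ring V V"
    unfolding LinearCombinations.module_hom_def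
    using A by (auto simp: mult_add_distrib_mat_vec mult_mat_vec)
  show ?thesis
    unfolding linear_map_def mod_hom_def mod_hom_axioms_def
    using vec_vs vec_module h by auto
qed

lemma lin_indpt_image:
  assumes A: "A \<in> carrier_mat n n" and B: "B \<in> carrier_mat n n"
    and BA: "B * A = 1\<^sub>m n" and S: "S \<subseteq> carrier_vec n" and fin: "finite S"
    and li: "lin_indpt S"
  shows "lin_indpt ((\<lambda>v. A *\<^sub>v v) ` S)"
proof -
  interpret T: linear_map class_ring V V "\<lambda>v. A *\<^sub>v v" by (rule mat_linear_map[OF A])
  have inj: "inj_on (\<lambda>v. A *\<^sub>v v) (carrier V)"
  proof (rule inj_onI)
    fix x y assume "x \<in> carrier V" "y \<in> carrier V" "A *\<^sub>v x = A *\<^sub>v y"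
    then have "B *\<^sub>v (A *\<^sub>v x) = B *\<^sub>v (A *\<^sub>v y)" by simp
    then show "x = y" using \<open>x \<in> carrier V\<close> \<open>y \<in> carrier V\<close> A B BA
      by (simp flip: assoc_mult_mat_vec)
  qed
  show ?thesis
  proof (rule finite_lin_indpt2)
    show "finite ((\<lambda>v. A *\<^sub>v v) ` S)" using fin by simp
    show "(\<lambda>v. A *\<^sub>v v) ` S \<subseteq> carrier_vec n" using A S by auto
    fix a assume lc: "lincomb a ((\<lambda>v. A *\<^sub>v v) ` S) = 0\<^sub>v n"
    have a: "a \<in> (\<lambda>v. A *\<^sub>v v) ` S \<rightarrow> UNIV" by simp
    have "lincomb a ((\<lambda>v. A *\<^sub>v v) ` S) = A *\<^sub>v lincomb (a \<circ> (\<lambda>v. A *\<^sub>v v)) S"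
      using T.lincomb_linear_image[OF inj, of S a] S a fin by auto
    then have z: "A *\<^sub>v lincomb (a \<circ> (\<lambda>v. A *\<^sub>v v)) S = 0\<^sub>v n" using lc by simp
    have lcc: "lincomb (a \<circ> (\<lambda>v. A *\<^sub>v v)) S \<in> carrier_vec n"
      using S by (intro lincomb_closed[simplified]) auto
    have "lincomb (a \<circ> (\<lambda>v. A *\<^sub>v v)) S = B *\<^sub>v (A *\<^sub>v lincomb (a \<circ> (\<lambda>v. A *\<^sub>v v)) S)"
      using lcc A B BA by (simp flip: assoc_mult_mat_vec)
    also have "\<dots> = 0\<^sub>v n" using z B by (simp add: mat_vec_zero)
    finally have "lincomb (a \<circ> (\<lambda>v. A *\<^sub>v v)) S = 0\<^sub>v n" .
    then have "a \<circ> (\<lambda>v. A *\<^sub>v v) \<in> S \<rightarrow> {0}"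
      using li fin not_lindepD[of S S "a \<circ> (\<lambda>v. A *\<^sub>v v)"] by auto
    then show "\<forall>v\<in>(\<lambda>v. A *\<^sub>v v) ` S. a v = 0" by auto
  qed
qed

end

theorem theorem1:
  fixes N n :: nat and d :: "nat \<Rightarrow> nat"
    and L K C Ms Mi :: "nat \<Rightarrow> complex mat"
    and Psi :: "nat \<Rightarrow> complex vec"
  defines "D \<equiv> tot_dim d N"
  defines "H \<equiv> bond_sum D N (\<lambda>j. mat_adjoint (L j) * L j)"
  defines "M \<equiv> site_prod D N Ms"
  defines "Minv \<equiv> site_prod_inv D N Mi"
  defines "Lt \<equiv> (\<lambda>j. M * L j * Minv)"
  defines "Ht \<equiv> bond_sum D N (\<lambda>j. mat_adjoint (Lt j) * C j * Lt j)"
  assumes dpos: "\<And>i. i < N \<Longrightarrow> 0 < d i"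
    and L_loc: "\<And>j. j < N - 1 \<Longrightarrow> acts_on d N {j, Suc j} (L j)"
    and M_loc: "\<And>j. j < N \<Longrightarrow> acts_on d N {j} (Ms j)"
    and Mi_loc: "\<And>j. j < N \<Longrightarrow> acts_on d N {j} (Mi j)"
    and M_inv: "\<And>j. j < N \<Longrightarrow> Ms j * Mi j = 1\<^sub>m D \<and> Mi j * Ms j = 1\<^sub>m D"
    and C_loc: "\<And>j. j < N - 1 \<Longrightarrow> acts_on d N {j, Suc j} (C j)"
    and K_dim: "\<And>j. j < N - 1 \<Longrightarrow> K j \<in> carrier_mat D D"
    and C_KK: "\<And>j. j < N - 1 \<Longrightarrow> C j = mat_adjoint (K j) * K j"
    and C_pd: "\<And>j v. j < N - 1 \<Longrightarrow> v \<in> carrier_vec D \<Longrightarrow> v \<noteq> 0\<^sub>v D \<Longrightarrow>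
                 Im ((C j *\<^sub>v v) \<bullet>c v) = 0 \<and> 0 < Re ((C j *\<^sub>v v) \<bullet>c v)"
    and G_def: "mat_kernel H = {v \<in> carrier_vec D. \<forall>j < N - 1. L j *\<^sub>v v = 0\<^sub>v D}"
    and n_pos: "0 < n"
    and Psi_dim: "\<And>i. i < n \<Longrightarrow> Psi i \<in> carrier_vec D"
    and Psi_inj: "inj_on Psi {..<n}"
    and Psi_li: "clin_indpt D (Psi ` {..<n})"
    and G_span: "mat_kernel H = cspan D (Psi ` {..<n})"
  shows "mat_kernel Ht = cspan D ((\<lambda>i. M *\<^sub>v Psi i) ` {..<n})
       \<and> mat_kernel Ht = {v \<in> carrier_vec D. \<forall>j < N - 1. Lt j *\<^sub>v v = 0\<^sub>v D}
       \<and> inj_on (\<lambda>i. M *\<^sub>v Psi i) {..<n}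
       \<and> clin_indpt D ((\<lambda>i. M *\<^sub>v Psi i) ` {..<n})"
  proof -
  have Msc: "\<And>j. j < N \<Longrightarrow> Ms j \<in> carrier_mat D D" and Mic: "\<And>j. j < N \<Longrightarrow> Mi j \<in> carrier_mat D D"
    using M_loc Mi_loc unfolding acts_on_def D_def by auto
  have Lc: "\<And>j. j < N - 1 \<Longrightarrow> L j \<in> carrier_mat D D"
    using L_loc unfolding acts_on_def D_def by auto
  have Cc: "\<And>j. j < N - 1 \<Longrightarrow> C j \<in> carrier_mat D D"
    using C_loc unfolding acts_on_def D_def by auto
  have site: "M \<in> carrier_mat D D \<and> Minv \<in> carrier_mat D D \<and> M * Minv = 1\<^sub>m D \<and> Minv * M = 1\<^sub>m D"
    unfolding M_def Minv_def site_prod_def site_prod_inv_def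
    by (rule site_inv) (use Msc Mic M_inv in auto)
  then have Mc: "M \<in> carrier_mat D D" and Mic': "Minv \<in> carrier_mat D D"
    and MMi: "M * Minv = 1\<^sub>m D" and MiM: "Minv * M = 1\<^sub>m D" by auto
  have Ltc: "\<And>j. j < N - 1 \<Longrightarrow> Lt j \<in> carrier_mat D D"
    unfolding Lt_def using Mc Mic' Lc by auto
  have adjc: "\<And>j. j < N - 1 \<Longrightarrow> mat_adjoint (Lt j) \<in> carrier_mat D D"
    using Ltc adj_carrier by blast
  have Fc: "\<And>j. j < N - 1 \<Longrightarrow> mat_adjoint (Lt j) * C j * Lt j \<in> carrier_mat D D"
    using adjc Cc Ltc by (meson mult_carrier_mat)
  have Fv: "\<And>j v. j < N - 1 \<Longrightarrow> v \<in> carrier_vec D \<Longrightarrow>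
      (mat_adjoint (Lt j) * C j * Lt j) *\<^sub>v v = mat_adjoint (Lt j) *\<^sub>v (C j *\<^sub>v (Lt j *\<^sub>v v))"
  proof -
    fix j and v :: "complex vec" assume j: "j < N - 1" and v: "v \<in> carrier_vec D"
    note a = adjc[OF j] Cc[OF j] Ltc[OF j]
    show "(mat_adjoint (Lt j) * C j * Lt j) *\<^sub>v v = mat_adjoint (Lt j) *\<^sub>v (C j *\<^sub>v (Lt j *\<^sub>v v))"
      using a v by (simp add: assoc_mult_mat_vec[of _ D D _ D])
  qed
  have Htc: "Ht \<in> carrier_mat D D"
    unfolding Ht_def bond_sum_def by (rule foldr_carrier) (use Fc in auto)
  have kerHt: "mat_kernel Ht = {v \<in> carrier_vec D. \<forall>j < N - 1. Lt j *\<^sub>v v = 0\<^sub>v D}"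
  proof
    show "mat_kernel Ht \<subseteq> {v \<in> carrier_vec D. \<forall>j < N - 1. Lt j *\<^sub>v v = 0\<^sub>v D}"
    proof
      fix v assume "v \<in> mat_kernel Ht"
      then have v: "v \<in> carrier_vec D" and Hv: "Ht *\<^sub>v v = 0\<^sub>v D"
        using mat_kernelD[OF Htc] by auto
      define q where "q j = (C j *\<^sub>v (Lt j *\<^sub>v v)) \<bullet>c (Lt j *\<^sub>v v)" for j
      have wc: "\<And>j. j < N - 1 \<Longrightarrow> Lt j *\<^sub>v v \<in> carrier_vec D" using Ltc v by (meson mult_mat_vec_carrier)
      have qF: "\<And>j. j < N - 1 \<Longrightarrow> ((mat_adjoint (Lt j) * C j * Lt j) *\<^sub>v v) \<bullet>c v = q j"
      proof -
        fix j assume j: "j < N - 1"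
        have cw: "C j *\<^sub>v (Lt j *\<^sub>v v) \<in> carrier_vec D" using Cc[OF j] wc[OF j] by auto
        show "((mat_adjoint (Lt j) * C j * Lt j) *\<^sub>v v) \<bullet>c v = q j"
          unfolding q_def Fv[OF j v] using adj_inner[OF Ltc[OF j] cw v] .
      qed
      have "(Ht *\<^sub>v v) \<bullet>c v = (\<Sum>j\<leftarrow>[0..<N-1]. ((mat_adjoint (Lt j) * C j * Lt j) *\<^sub>v v) \<bullet>c v)"
        unfolding Ht_def bond_sum_def by (rule foldr_quad) (use Fc v in auto)
      also have "\<dots> = (\<Sum>j\<leftarrow>[0..<N-1]. q j)"
        by (rule arg_cong[where f = sum_list], rule map_cong) (use qF in auto)
      also have "\<dots> = (\<Sum>j\<in>{0..<N-1}. q j)"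
        by (simp add: sum_set_upt_conv_sum_list_nat[symmetric])
      finally have "(\<Sum>j\<in>{0..<N-1}. q j) = 0" using Hv v by (simp add: conjugate_vec_def)
      then have "(\<Sum>j\<in>{0..<N-1}. Re (q j)) = 0" by (metis Re_sum zero_complex.simps(1))
      moreover have qnn: "\<And>j. j < N - 1 \<Longrightarrow> 0 \<le> Re (q j)"
      proof -
        fix j assume j: "j < N - 1"
        show "0 \<le> Re (q j)"
        proof (cases "Lt j *\<^sub>v v = 0\<^sub>v D")
          case True then show ?thesis unfolding q_def using Cc[OF j]
            by (simp add: conjugate_vec_def)
        next
          case False then show ?thesis unfolding q_def using C_pd[OF j wc[OF j]] by auto
        qed
      qed
      ultimately have "\<forall>j\<in>{0..<N-1}. Re (q j) = 0"
        by (subst sum_nonneg_eq_0_iff[symmetric]) auto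
      then have "\<forall>j < N - 1. Lt j *\<^sub>v v = 0\<^sub>v D"
        unfolding q_def using C_pd wc by fastforce
      then show "v \<in> {v \<in> carrier_vec D. \<forall>j < N - 1. Lt j *\<^sub>v v = 0\<^sub>v D}" using v by auto
    qed
    show "{v \<in> carrier_vec D. \<forall>j < N - 1. Lt j *\<^sub>v v = 0\<^sub>v D} \<subseteq> mat_kernel Ht"
    proof
      fix v assume v: "v \<in> {v \<in> carrier_vec D. \<forall>j < N - 1. Lt j *\<^sub>v v = 0\<^sub>v D}"
      have "Ht *\<^sub>v v = 0\<^sub>v D"
        unfolding Ht_def bond_sum_def
      proof (rule foldr_zero)
        fix j assume "j \<in> set [0..<N-1]"
        then have j: "j < N - 1" by simp
        show "mat_adjoint (Lt j) * C j * Lt j \<in> carrier_mat D D \<and>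
              (mat_adjoint (Lt j) * C j * Lt j) *\<^sub>v v = 0\<^sub>v D"
          using Fc[OF j] Fv[OF j] v j Cc[OF j] adjc[OF j] by auto
      qed (use v in auto)
      then show "v \<in> mat_kernel Ht" using v Htc by (auto intro: mat_kernelI)
    qed
  qed
  let ?S = "Psi ` {..<n}"
  have Sc: "?S \<subseteq> carrier_vec D" using Psi_dim by auto
  have "{v \<in> carrier_vec D. \<forall>j < N - 1. Lt j *\<^sub>v v = 0\<^sub>v D}
      = {v \<in> carrier_vec D. Minv *\<^sub>v v \<in> mat_kernel H}"
  proof -
    have "\<And>(v :: complex vec) j. v \<in> carrier_vec D \<Longrightarrow> j < N - 1 \<Longrightarrow>
        (Lt j *\<^sub>v v = 0\<^sub>v D) = (L j *\<^sub>v (Minv *\<^sub>v v) = 0\<^sub>v D)"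
    proof -
      fix v :: "complex vec" and j assume v: "v \<in> carrier_vec D" and j: "j < N - 1"
      have u: "L j *\<^sub>v (Minv *\<^sub>v v) \<in> carrier_vec D" using Lc[OF j] Mic' v by auto
      have e: "Lt j *\<^sub>v v = M *\<^sub>v (L j *\<^sub>v (Minv *\<^sub>v v))"
      proof -
        have "(M * L j * Minv) *\<^sub>v v = (M * L j) *\<^sub>v (Minv *\<^sub>v v)"
          using Mc Mic' Lc[OF j] v by (meson assoc_mult_mat_vec mult_carrier_mat)
        also have "\<dots> = M *\<^sub>v (L j *\<^sub>v (Minv *\<^sub>v v))"
          using Mc Mic' Lc[OF j] v by (meson assoc_mult_mat_vec mult_mat_vec_carrier)
        finally show ?thesis unfolding Lt_def .
      qed
      have "Minv *\<^sub>v (M *\<^sub>v (L j *\<^sub>v (Minv *\<^sub>v v))) = L j *\<^sub>v (Minv *\<^sub>v v)"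
        using u Mc Mic' MiM by (simp flip: assoc_mult_mat_vec)
      then show "(Lt j *\<^sub>v v = 0\<^sub>v D) = (L j *\<^sub>v (Minv *\<^sub>v v) = 0\<^sub>v D)"
        using e Mc Mic' by (metis mat_vec_zero)
    qed
    then show ?thesis using G_def Mic' by auto
  qed
  also have "\<dots> = {v \<in> carrier_vec D. Minv *\<^sub>v v \<in> cspan D ?S}" using G_span by simp
  also have "\<dots> = cspan D ((\<lambda>v. M *\<^sub>v v) ` ?S)"
    by (rule vec_space.span_image_inv[symmetric, OF Mc Mic' MiM MMi Sc])
  also have "(\<lambda>v. M *\<^sub>v v) ` ?S = (\<lambda>i. M *\<^sub>v Psi i) ` {..<n}" by (simp add: image_image)
  finally have spaneq: "{v \<in> carrier_vec D. \<forall>j < N - 1. Lt j *\<^sub>v v = 0\<^sub>v D} = cspan D ((\<lambda>i. M *\<^sub>v Psi i) ` {..<n})" .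
  have inj: "inj_on (\<lambda>i. M *\<^sub>v Psi i) {..<n}"
  proof (rule inj_onI)
    fix i k assume i: "i \<in> {..<n}" and k: "k \<in> {..<n}" and e: "M *\<^sub>v Psi i = M *\<^sub>v Psi k"
    have "Minv *\<^sub>v (M *\<^sub>v Psi i) = Minv *\<^sub>v (M *\<^sub>v Psi k)" using e by simp
    then have "Psi i = Psi k" using i k Psi_dim Mc Mic' MiM by (simp flip: assoc_mult_mat_vec)
    then show "i = k" using Psi_inj i k by (auto dest: inj_onD)
  qed
  have li: "clin_indpt D ((\<lambda>v. M *\<^sub>v v) ` ?S)"
    by (rule vec_space.lin_indpt_image[OF Mc Mic' MiM Sc _ Psi_li]) simp
  then have li': "clin_indpt D ((\<lambda>i. M *\<^sub>v Psi i) ` {..<n})" by (simp add: image_image)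
  show ?thesis using kerHt spaneq inj li' by simp
qed

end
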